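(* Assume (F1) and (F2). Then there exists a constant $\bar\Delta_2\in(0,1]$ such that for any $\Delta_2\in(0,\bar\Delta_2)$, $y,z\in\mathbb{R}^{n_2}$, $x\in\mathbb{R}^{n_1}$ and integers $n\ge0$, $m\ge0$, $$\mathbb{E}|Y^{x,y}_{n,m}-Y^{x,z}_{n,m}|^2\le|y-z|^2e^{-\beta m\Delta_2/2}.$$
   Context: $|\cdot|$ Euclidean/trace (Frobenius) norm. Continuous $f:\mathbb{R}^{n_1}\times\mathbb{R}^{n_2}\to\mathbb{R}^{n_2}$, $g:\mathbb{R}^{n_1}\times\mathbb{R}^{n_2}\to\mathbb{R}^{n_2\times d_2}$ with (F1) $|f(x_1,y_1)-f(x_2,y_2)|\vee|g(x_1,y_1)-g(x_2,y_2)|\le L(|x_1-x_2|+|y_1-y_2|)$ for some $L>0$; (F2) $2(y_1-y_2)^T(f(x,y_1)-f(x,y_2))+|g(x,y_1)-g(x,y_2)|^2\le-\beta|y_1-y_2|^2$ for some $\beta>0$ (this $\beta$ appears in the claim). $\{W^2_n\}_{n\ge0}$ are mutually independent $d_2$-dimensional Brownian motions. For $x\in\mathbb{R}^{n_1}$, initial value $y\in\mathbb{R}^{n_2}$, $n\ge0$: $Y^{x,y}_{n,0}=y$, $Y^{x,y}_{n,m+1}=Y^{x,y}_{n,m}+f(x,Y^{x,y}_{n,m})\Delta_2+g(x,Y^{x,y}_{n,m})(W^2_n((m+1)\Delta_2)-W^2_n(m\Delta_2))$ (the chains with initial values $y$ and $z$ use the same $W^2_n$). *)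

theory Defs
  imports "HOL-Probability.Probability"
begin

definition brownian_motion :: "'a measure \<Rightarrow> (real \<Rightarrow> 'a \<Rightarrow> real ^ 'd) \<Rightarrow> bool" where
  "brownian_motion M W \<longleftrightarrow>
     prob_space M \<and>
     (\<forall>t\<ge>0. W t \<in> borel_measurable M) \<and>
     (AE \<omega> in M. W 0 \<omega> = 0) \<and>
     (AE \<omega> in M. continuous_on {0..} (\<lambda>t. W t \<omega>)) \<and>
     (\<forall>s t. 0 \<le> s \<and> s < t \<longrightarrow>
        (\<forall>i. distributed M lborel (\<lambda>\<omega>. (W t \<omega> - W s \<omega>) $ i) (normal_density 0 (sqrt (t - s)))) \<and>
        prob_space.indep_vars M (\<lambda>_. borel) (\<lambda>i \<omega>. (W t \<omega> - W s \<omega>) $ i) UNIV) \<and>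
     (\<forall>(ts :: nat \<Rightarrow> real) k. 0 \<le> ts 0 \<and> (\<forall>j<k. ts j < ts (Suc j)) \<longrightarrow>
        prob_space.indep_vars M (\<lambda>_. borel) (\<lambda>j \<omega>. W (ts (Suc j)) \<omega> - W (ts j) \<omega>) {..<k})"

text \<open>Euler--Maruyama chain Y^{x,y}_{n,m} driven by the Brownian path W (= W^2_n) with step size \<Delta>.\<close>
primrec em_chain ::
  "(real ^ 'n1 \<Rightarrow> real ^ 'n2 \<Rightarrow> real ^ 'n2) \<Rightarrow> (real ^ 'n1 \<Rightarrow> real ^ 'n2 \<Rightarrow> real ^ 'd ^ 'n2) \<Rightarrow> real \<Rightarrow>
   (real \<Rightarrow> 'a \<Rightarrow> real ^ 'd) \<Rightarrow> real ^ 'n1 \<Rightarrow> real ^ 'n2 \<Rightarrow> nat \<Rightarrow> 'a \<Rightarrow> real ^ 'n2" where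
  "em_chain f g \<Delta> W x y 0 \<omega> = y"
| "em_chain f g \<Delta> W x y (Suc m) \<omega> =
     em_chain f g \<Delta> W x y m \<omega> + \<Delta> *\<^sub>R f x (em_chain f g \<Delta> W x y m \<omega>)
     + g x (em_chain f g \<Delta> W x y m \<omega>) *v (W (real (Suc m) * \<Delta>) \<omega> - W (real m * \<Delta>) \<omega>)"

end

theory Submission
  imports Defs
begin

lemma (in prob_space) gauss_sq:
  fixes X :: "'a \<Rightarrow> real^'d" and a :: "real^'n" and B :: "real^'d^'n"
  assumes D: "\<And>i. distributed M lborel (\<lambda>\<omega>. X \<omega> $ i) (normal_density 0 (sqrt \<Delta>))"
   and \<Delta>: "\<Delta> > 0" and ind: "indep_vars (\<lambda>_. borel) (\<lambda>i \<omega>. X \<omega> $ i) UNIV"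
  shows "(\<integral>\<^sup>+\<omega>. ennreal ((norm (a + B *v X \<omega>))\<^sup>2) \<partial>M) = ennreal ((norm a)\<^sup>2 + \<Delta> * (norm B)\<^sup>2)"
proof -
  have sq: "sqrt \<Delta> > 0" using \<Delta> by simp
  have int1: "integrable M (\<lambda>\<omega>. X \<omega> $ k)" for k
    using distributed_integrable[OF D[of k], of "\<lambda>x. x"] integrable_normal_moment_nz_1[OF sq, of 0]
    by simp
  have E1: "(\<integral>\<omega>. X \<omega> $ k \<partial>M) = 0" for k
    using normal_distributed_expectation[OF sq D[of k]] .
  have int2s: "integrable M (\<lambda>\<omega>. (X \<omega> $ k)^2)" for k
    using distributed_integrable[OF D[of k], of "\<lambda>x. x^2"] integrable_normal_moment[OF sq, of 0 2]
    by simp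
  have E2s: "(\<integral>\<omega>. (X \<omega> $ k)^2 \<partial>M) = \<Delta>" for k
    using normal_distributed_variance[OF sq D[of k]] E1[of k] \<Delta> by simp
  have indkl: "k \<noteq> l \<Longrightarrow> (\<integral>\<omega>. X \<omega> $ k * X \<omega> $ l \<partial>M) = 0 \<and> integrable M (\<lambda>\<omega>. X \<omega> $ k * X \<omega> $ l)" for k l
  proof -
    assume kl: "k \<noteq> l"
    have I: "indep_vars (\<lambda>_. borel) (\<lambda>i \<omega>. X \<omega> $ i) {k, l}"
      using indep_vars_subset[OF ind] by simp
    have "(\<integral>\<omega>. (\<Prod>i\<in>{k,l}. X \<omega> $ i) \<partial>M) = (\<Prod>i\<in>{k,l}. \<integral>\<omega>. X \<omega> $ i \<partial>M)"
      "integrable M (\<lambda>\<omega>. (\<Prod>i\<in>{k,l}. X \<omega> $ i))"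
      using indep_vars_lebesgue_integral[OF _ I] indep_vars_integrable[OF _ I] int1 by auto
    then show ?thesis using kl E1 by simp
  qed
  have int2: "integrable M (\<lambda>\<omega>. X \<omega> $ k * X \<omega> $ l)" for k l
    using indkl[of k l] int2s[of k] by (cases "k = l") (auto simp: power2_eq_square)
  have E2: "(\<integral>\<omega>. X \<omega> $ k * X \<omega> $ l \<partial>M) = (if k = l then \<Delta> else 0)" for k l
    using indkl[of k l] E2s[of k] by (cases "k = l") (auto simp: power2_eq_square)
  have eq: "(norm (a + B *v v))\<^sup>2 = (\<Sum>i\<in>UNIV. (a$i)^2) + (\<Sum>i\<in>UNIV. \<Sum>k\<in>UNIV. (2*a$i*B$i$k) * v$k)
       + (\<Sum>i\<in>UNIV. \<Sum>k\<in>UNIV. \<Sum>l\<in>UNIV. (B$i$k*B$i$l) * (v$k * v$l))" for v :: "real^'d"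
  proof -
    have "(norm (a + B *v v))\<^sup>2 = (\<Sum>i\<in>UNIV. (a$i + (\<Sum>k\<in>UNIV. B$i$k * v$k))^2)"
      unfolding power2_norm_eq_inner inner_vec_def
      by (simp add: matrix_vector_mult_def power2_eq_square mult.commute)
    also have "\<dots> = (\<Sum>i\<in>UNIV. (a$i)^2 + (\<Sum>k\<in>UNIV. (2*a$i*B$i$k) * v$k)
       + (\<Sum>k\<in>UNIV. \<Sum>l\<in>UNIV. (B$i$k*B$i$l) * (v$k * v$l)))"
      by (intro sum.cong refl) (simp add: power2_eq_square algebra_simps sum_distrib_left sum_product)
    finally show ?thesis by (simp add: sum.distrib)
  qed
  have nB: "(norm B)\<^sup>2 = (\<Sum>i\<in>UNIV. \<Sum>k\<in>UNIV. (B$i$k)^2)"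
    unfolding power2_norm_eq_inner inner_vec_def by (simp add: power2_eq_square)
  have na: "(norm a)\<^sup>2 = (\<Sum>i\<in>UNIV. (a$i)^2)"
    unfolding power2_norm_eq_inner inner_vec_def by (simp add: power2_eq_square)
  let ?h = "\<lambda>\<omega>. (\<Sum>i\<in>UNIV. (a$i)^2) + (\<Sum>i\<in>UNIV. \<Sum>k\<in>UNIV. (2*a$i*B$i$k) * X \<omega>$k)
       + (\<Sum>i\<in>UNIV. \<Sum>k\<in>UNIV. \<Sum>l\<in>UNIV. (B$i$k*B$i$l) * (X \<omega>$k * X \<omega>$l))"
  have inth: "integrable M ?h"
    by (intro Bochner_Integration.integrable_add Bochner_Integration.integrable_sum integrable_mult_right int1 int2 integrable_const finite_UNIV)
  have Eh: "integral\<^sup>L M ?h = (norm a)\<^sup>2 + \<Delta> * (norm B)\<^sup>2"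
  proof -
    have "integral\<^sup>L M ?h = (\<Sum>i\<in>UNIV. (a$i)^2) + (\<Sum>i\<in>UNIV. \<Sum>k\<in>UNIV. (2*a$i*B$i$k) * 0)
       + (\<Sum>i\<in>UNIV. \<Sum>k\<in>UNIV. \<Sum>l\<in>UNIV. (B$i$k*B$i$l) * (if k = l then \<Delta> else 0))"
      using int1 int2 E1 E2
      by (simp add: integral_add integrable_sum integral_sum integrable_mult_right prob_space del: integral_mult_right_zero)
    also have "\<dots> = (\<Sum>i\<in>UNIV. (a$i)^2) + \<Delta> * (\<Sum>i\<in>UNIV. \<Sum>k\<in>UNIV. (B$i$k)^2)"
      by (simp add: if_distrib sum_distrib_left power2_eq_square mult.commute cong: if_cong)
    also have "\<dots> = (norm a)\<^sup>2 + \<Delta> * (norm B)\<^sup>2"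
      by (simp only: na nB)
    finally show ?thesis .
  qed
  have "(\<integral>\<^sup>+\<omega>. ennreal ((norm (a + B *v X \<omega>))\<^sup>2) \<partial>M) = (\<integral>\<^sup>+\<omega>. ennreal (?h \<omega>) \<partial>M)"
    using eq by simp
  also have "\<dots> = ennreal (integral\<^sup>L M ?h)"
    by (rule nn_integral_eq_integral[OF inth]) (auto simp: eq[symmetric])
  finally show ?thesis using Eh by simp
qed

primrec chainD :: "(real^'n \<Rightarrow> real^'n) \<Rightarrow> (real^'n \<Rightarrow> real^'d^'n) \<Rightarrow> real \<Rightarrow> real^'n
   \<Rightarrow> (nat \<Rightarrow> real^'d) \<Rightarrow> nat \<Rightarrow> real^'n" where
  "chainD F G \<Delta> y d 0 = y"
| "chainD F G \<Delta> y d (Suc m) = chainD F G \<Delta> y d m + \<Delta> *\<^sub>R F (chainD F G \<Delta> y d m)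
     + G (chainD F G \<Delta> y d m) *v d m"

lemma em_chain_eq:
  "em_chain f g \<Delta> W x y m \<omega> = chainD (f x) (g x) \<Delta> y (\<lambda>j. W (real (Suc j) * \<Delta>) \<omega> - W (real j * \<Delta>) \<omega>) m"
  by (induction m) auto

lemma chainD_restrict:
  "m \<le> k \<Longrightarrow> chainD F G \<Delta> y (restrict d {..<k}) m = chainD F G \<Delta> y d m"
  by (induction m) auto

lemma continuous_on_mv:
  fixes G :: "'a::topological_space \<Rightarrow> real^'d^'n"
  assumes "continuous_on S G" "continuous_on S v"
  shows "continuous_on S (\<lambda>p. G p *v v p)"
  unfolding matrix_vector_mult_def
  by (intro continuous_on_vec_lambda continuous_intros assms)

lemma step_cont:
  fixes F :: "real^'n \<Rightarrow> real^'n" and G :: "real^'n \<Rightarrow> real^'d^'n"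
  assumes "continuous_on UNIV F" "continuous_on UNIV G"
  shows "continuous_on UNIV (\<lambda>p::((real^'n) \<times> (real^'d)). fst p + \<Delta> *\<^sub>R F (fst p) + G (fst p) *v snd p)"
proof -
  have F: "continuous_on UNIV (\<lambda>p::((real^'n) \<times> (real^'d)). F (fst p))"
    using continuous_on_compose2[OF assms(1) continuous_on_fst[OF continuous_on_id]] by auto
  have G: "continuous_on UNIV (\<lambda>p::((real^'n) \<times> (real^'d)). G (fst p))"
    using continuous_on_compose2[OF assms(2) continuous_on_fst[OF continuous_on_id]] by auto
  show ?thesis
    by (intro continuous_intros continuous_on_mv F G)
qed

lemma chainD_meas:
  fixes F :: "real^'n \<Rightarrow> real^'n" and G :: "real^'n \<Rightarrow> real^'d^'n"
  assumes "continuous_on UNIV F" "continuous_on UNIV G"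
  shows "m \<le> k \<Longrightarrow> (\<lambda>d. chainD F G \<Delta> y d m) \<in> borel_measurable (PiM {..<k} (\<lambda>_. borel))"
proof (induction m)
  case 0
  then show ?case by simp
next
  case (Suc m)
  let ?C = "\<lambda>p::((real^'n) \<times> (real^'d)). fst p + \<Delta> *\<^sub>R F (fst p) + G (fst p) *v snd p"
  have C: "?C \<in> borel_measurable (borel \<Otimes>\<^sub>M borel)"
    unfolding borel_prod by (rule borel_measurable_continuous_onI[OF step_cont[OF assms]])
  have P: "(\<lambda>d. (chainD F G \<Delta> y d m, d m)) \<in> measurable (PiM {..<k} (\<lambda>_. borel)) (borel \<Otimes>\<^sub>M borel)"
    using Suc by (intro measurable_Pair measurable_component_singleton) auto
  show ?case
    using measurable_compose[OF P C] by simp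
qed

lemma pointwise:
  fixes e u :: "real^'n" and Gd :: "real^'d^'n"
  assumes u: "norm u \<le> L * norm e" and F2: "2 * (e \<bullet> u) + (norm Gd)\<^sup>2 \<le> - \<beta> * (norm e)\<^sup>2"
    and \<Delta>: "0 < \<Delta>" and small: "L^2 * \<Delta> \<le> \<beta> / 2" and L: "L > 0"
  shows "(norm (e + \<Delta> *\<^sub>R u))\<^sup>2 + \<Delta> * (norm Gd)\<^sup>2 \<le> exp (- \<beta> * \<Delta> / 2) * (norm e)\<^sup>2"
proof -
  have ex: "(norm (e + \<Delta> *\<^sub>R u))\<^sup>2 = (norm e)\<^sup>2 + 2 * \<Delta> * (e \<bullet> u) + \<Delta>^2 * (norm u)\<^sup>2"
    unfolding power2_norm_eq_inner by (simp add: inner_add_left inner_add_right inner_commute power2_eq_square algebra_simps)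
  have u2: "(norm u)\<^sup>2 \<le> L^2 * (norm e)\<^sup>2"
    using u by (metis norm_ge_zero power_mono power_mult_distrib)
  have "(norm (e + \<Delta> *\<^sub>R u))\<^sup>2 + \<Delta> * (norm Gd)\<^sup>2
      = (norm e)\<^sup>2 + \<Delta> * (2 * (e \<bullet> u) + (norm Gd)\<^sup>2) + \<Delta>^2 * (norm u)\<^sup>2"
    using ex by (simp add: algebra_simps)
  also have "\<dots> \<le> (norm e)\<^sup>2 + \<Delta> * (- \<beta> * (norm e)\<^sup>2) + \<Delta>^2 * (L^2 * (norm e)\<^sup>2)"
    using F2 u2 \<Delta> by (intro add_mono mult_left_mono) auto
  also have "\<dots> = (1 - \<beta> * \<Delta> + (L^2 * \<Delta>) * \<Delta>) * (norm e)\<^sup>2"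
    by (simp add: algebra_simps power2_eq_square)
  also have "\<dots> \<le> (1 + (- \<beta> * \<Delta> / 2)) * (norm e)\<^sup>2"
    using small \<Delta> by (intro mult_right_mono) (auto simp: mult_right_mono[OF small, of \<Delta>] algebra_simps
       intro: order_trans[OF mult_right_mono[OF small]])
  also have "\<dots> \<le> exp (- \<beta> * \<Delta> / 2) * (norm e)\<^sup>2"
    by (intro mult_right_mono exp_ge_add_one_self) auto
  finally show ?thesis .
qed

lemma cont_comp_UNIV:
  "continuous_on UNIV F \<Longrightarrow> continuous_on UNIV g \<Longrightarrow> continuous_on UNIV (\<lambda>r. F (g r))"
  using continuous_on_compose2[of UNIV F UNIV g] by auto

lemma step_lemma:
  fixes W :: "real \<Rightarrow> 'w \<Rightarrow> real^'d" and F :: "real^'n \<Rightarrow> real^'n" and G :: "real^'n \<Rightarrow> real^'d^'n"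
  assumes bm: "brownian_motion M W" and cF: "continuous_on UNIV F" and cG: "continuous_on UNIV G"
    and \<Delta>: "0 < \<Delta>" and small: "L^2 * \<Delta> \<le> \<beta> / 2" and L: "L > 0"
    and Fl: "\<And>y1 y2. norm (F y1 - F y2) \<le> L * norm (y1 - y2)"
    and F2: "\<And>y1 y2. 2 * ((y1 - y2) \<bullet> (F y1 - F y2)) + (norm (G y1 - G y2))\<^sup>2 \<le> - \<beta> * (norm (y1 - y2))\<^sup>2"
  shows "(\<integral>\<^sup>+\<omega>. ennreal ((norm (chainD F G \<Delta> y (\<lambda>j. W (real (Suc j) * \<Delta>) \<omega> - W (real j * \<Delta>) \<omega>) (Suc m)
            - chainD F G \<Delta> z (\<lambda>j. W (real (Suc j) * \<Delta>) \<omega> - W (real j * \<Delta>) \<omega>) (Suc m)))\<^sup>2) \<partial>M)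
      \<le> ennreal (exp (- \<beta> * \<Delta> / 2)) * (\<integral>\<^sup>+\<omega>. ennreal ((norm (chainD F G \<Delta> y (\<lambda>j. W (real (Suc j) * \<Delta>) \<omega> - W (real j * \<Delta>) \<omega>) m
            - chainD F G \<Delta> z (\<lambda>j. W (real (Suc j) * \<Delta>) \<omega> - W (real j * \<Delta>) \<omega>) m))\<^sup>2) \<partial>M)"
proof -
  interpret prob_space M using bm unfolding brownian_motion_def by simp
  define D where "D j \<omega> = W (real (Suc j) * \<Delta>) \<omega> - W (real j * \<Delta>) \<omega>" for j \<omega>
  have ind: "indep_vars (\<lambda>_. borel) D {..<Suc m}"
  proof -
    have "\<forall>(ts :: nat \<Rightarrow> real) k. 0 \<le> ts 0 \<and> (\<forall>j<k. ts j < ts (Suc j)) \<longrightarrow>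
        indep_vars (\<lambda>_. borel) (\<lambda>j \<omega>. W (ts (Suc j)) \<omega> - W (ts j) \<omega>) {..<k}"
      using bm unfolding brownian_motion_def by blast
    from this[rule_format, of "\<lambda>j. real j * \<Delta>" "Suc m"] \<Delta> show ?thesis
      by (simp add: D_def[abs_def] algebra_simps)
  qed
  have distD: "\<And>i. distributed M lborel (\<lambda>\<omega>. D m \<omega> $ i) (normal_density 0 (sqrt \<Delta>))"
   and indD: "indep_vars (\<lambda>_. borel) (\<lambda>i \<omega>. D m \<omega> $ i) UNIV"
  proof -
    have "\<forall>s t. 0 \<le> s \<and> s < t \<longrightarrow>
        (\<forall>i. distributed M lborel (\<lambda>\<omega>. (W t \<omega> - W s \<omega>) $ i) (normal_density 0 (sqrt (t - s)))) \<and>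
        indep_vars (\<lambda>_. borel) (\<lambda>i \<omega>. (W t \<omega> - W s \<omega>) $ i) UNIV"
      using bm unfolding brownian_motion_def by blast
    from this[rule_format, of "real m * \<Delta>" "real (Suc m) * \<Delta>"] \<Delta>
    have "(\<forall>i. distributed M lborel (\<lambda>\<omega>. D m \<omega> $ i) (normal_density 0 (sqrt (real (Suc m) * \<Delta> - real m * \<Delta>)))) \<and>
        indep_vars (\<lambda>_. borel) (\<lambda>i \<omega>. D m \<omega> $ i) UNIV"
      by (simp add: D_def algebra_simps)
    moreover have "real (Suc m) * \<Delta> - real m * \<Delta> = \<Delta>" by (simp add: algebra_simps)
    ultimately show "\<And>i. distributed M lborel (\<lambda>\<omega>. D m \<omega> $ i) (normal_density 0 (sqrt \<Delta>))"
      "indep_vars (\<lambda>_. borel) (\<lambda>i \<omega>. D m \<omega> $ i) UNIV" by auto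
  qed
  have iv: "indep_var (PiM {..<m} (\<lambda>_. borel)) (\<lambda>\<omega>. restrict (\<lambda>i. D i \<omega>) {..<m})
      (PiM {m} (\<lambda>_. borel)) (\<lambda>\<omega>. restrict (\<lambda>i. D i \<omega>) {m})"
    by (rule indep_var_restrict[OF ind]) auto
  define Y1 where "Y1 h = (chainD F G \<Delta> y h m, chainD F G \<Delta> z h m)" for h
  have Y1m: "Y1 \<in> measurable (PiM {..<m} (\<lambda>_. borel)) (borel \<Otimes>\<^sub>M borel)"
    unfolding Y1_def by (intro measurable_Pair chainD_meas[OF cF cG]) auto
  have Y2m: "(\<lambda>h. h m) \<in> measurable (PiM {m} (\<lambda>_. borel)) (borel :: (real^'d) measure)"
    by (rule measurable_component_singleton) auto
  define P where "P \<omega> = (chainD F G \<Delta> y (\<lambda>j. D j \<omega>) m, chainD F G \<Delta> z (\<lambda>j. D j \<omega>) m)" for \<omega>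
  define RU where "RU \<omega> = restrict (\<lambda>i. D i \<omega>) {..<m}" for \<omega>
  define RV where "RV \<omega> = restrict (\<lambda>i. D i \<omega>) {m}" for \<omega>
  have Y1RU: "Y1 (RU \<omega>) = P \<omega>" for \<omega>
    by (auto simp: Y1_def P_def RU_def chainD_restrict)
  have RVm: "RV \<omega> m = D m \<omega>" for \<omega> by (simp add: RV_def)
  have rvU: "random_variable (PiM {..<m} (\<lambda>_. borel)) RU"
   and rvV: "random_variable (PiM {m} (\<lambda>_. borel)) RV"
   and deq: "distr M (PiM {..<m} (\<lambda>_. borel)) RU \<Otimes>\<^sub>M distr M (PiM {m} (\<lambda>_. borel)) RV
       = distr M (PiM {..<m} (\<lambda>_. borel) \<Otimes>\<^sub>M PiM {m} (\<lambda>_. borel)) (\<lambda>x. (RU x, RV x))"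
    using iv unfolding indep_var_distribution_eq RU_def[abs_def] RV_def[abs_def] by auto
  define h where "h r = (norm ((fst (fst r) + \<Delta> *\<^sub>R F (fst (fst r)) + G (fst (fst r)) *v snd r)
      - (snd (fst r) + \<Delta> *\<^sub>R F (snd (fst r)) + G (snd (fst r)) *v snd r)))\<^sup>2"
    for r :: "((real^'n) \<times> (real^'n)) \<times> (real^'d)"
  have hc: "continuous_on UNIV h"
  proof -
    have c1: "continuous_on UNIV (\<lambda>r::((real^'n) \<times> (real^'n)) \<times> (real^'d). F (fst (fst r)))"
      "continuous_on UNIV (\<lambda>r::((real^'n) \<times> (real^'n)) \<times> (real^'d). F (snd (fst r)))"
      "continuous_on UNIV (\<lambda>r::((real^'n) \<times> (real^'n)) \<times> (real^'d). G (fst (fst r)))"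
      "continuous_on UNIV (\<lambda>r::((real^'n) \<times> (real^'n)) \<times> (real^'d). G (snd (fst r)))"
      by (rule cont_comp_UNIV[OF cF], intro continuous_intros,
          rule cont_comp_UNIV[OF cF], intro continuous_intros,
          rule cont_comp_UNIV[OF cG], intro continuous_intros,
          rule cont_comp_UNIV[OF cG], intro continuous_intros)
    show ?thesis unfolding h_def
      by (intro continuous_intros continuous_on_mv c1)
  qed
  have hm: "h \<in> borel_measurable ((borel \<Otimes>\<^sub>M borel) \<Otimes>\<^sub>M borel)"
    unfolding borel_prod by (rule borel_measurable_continuous_onI[OF hc])
  define H where "H r = ennreal (h r)" for r
  have Hm: "H \<in> borel_measurable ((borel \<Otimes>\<^sub>M borel) \<Otimes>\<^sub>M borel)"
    unfolding H_def using hm by measurable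
  let ?E = "\<lambda>k \<omega>. ennreal ((norm (chainD F G \<Delta> y (\<lambda>j. W (real (Suc j) * \<Delta>) \<omega> - W (real j * \<Delta>) \<omega>) k
            - chainD F G \<Delta> z (\<lambda>j. W (real (Suc j) * \<Delta>) \<omega> - W (real j * \<Delta>) \<omega>) k))\<^sup>2)"
  define H' where "H' r = H (Y1 (fst r), snd r m)" for r :: "(nat \<Rightarrow> real^'d) \<times> (nat \<Rightarrow> real^'d)"
  have H'm: "H' \<in> borel_measurable (PiM {..<m} (\<lambda>_. borel) \<Otimes>\<^sub>M PiM {m} (\<lambda>_. borel))"
  proof -
    have "(\<lambda>r::(nat \<Rightarrow> real^'d) \<times> (nat \<Rightarrow> real^'d). (Y1 (fst r), snd r m))
       \<in> measurable (PiM {..<m} (\<lambda>_. borel) \<Otimes>\<^sub>M PiM {m} (\<lambda>_. borel)) ((borel \<Otimes>\<^sub>M borel) \<Otimes>\<^sub>M borel)"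
      by (intro measurable_Pair measurable_compose[OF measurable_fst Y1m]
          measurable_compose[OF measurable_snd Y2m])
    from measurable_compose[OF this Hm] show ?thesis by (simp add: H'_def[abs_def])
  qed
  let ?S = "PiM {..<m} (\<lambda>_. borel) :: (nat \<Rightarrow> real^'d) measure"
  let ?T = "PiM {m} (\<lambda>_. borel) :: (nat \<Rightarrow> real^'d) measure"
  have "(\<integral>\<^sup>+\<omega>. ?E (Suc m) \<omega> \<partial>M) = (\<integral>\<^sup>+\<omega>. H' (RU \<omega>, RV \<omega>) \<partial>M)"
    by (simp add: H'_def Y1RU RVm H_def h_def P_def D_def)
  also have "\<dots> = (\<integral>\<^sup>+r. H' r \<partial>distr M (?S \<Otimes>\<^sub>M ?T) (\<lambda>x. (RU x, RV x)))"
    by (rule nn_integral_distr[symmetric]) (auto intro: measurable_Pair rvU rvV H'm)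
  also have "\<dots> = (\<integral>\<^sup>+r. H' r \<partial>(distr M ?S RU \<Otimes>\<^sub>M distr M ?T RV))"
    by (simp add: deq)
  also have "\<dots> = (\<integral>\<^sup>+p. \<integral>\<^sup>+v. H' (p, v) \<partial>distr M ?T RV \<partial>distr M ?S RU)"
  proof -
    interpret T: prob_space "distr M ?T RV" by (rule prob_space_distr[OF rvV])
    show ?thesis
      by (rule T.nn_integral_fst[symmetric]) (use H'm in simp)
  qed
  also have "\<dots> \<le> (\<integral>\<^sup>+u. ennreal (exp (- \<beta> * \<Delta> / 2) * (norm (fst (Y1 u) - snd (Y1 u)))\<^sup>2) \<partial>distr M ?S RU)"
  proof (rule nn_integral_mono)
    fix u :: "nat \<Rightarrow> real^'d"
    obtain p1 q where p: "Y1 u = (p1, q)" by fastforce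
    define a where "a = (p1 - q) + \<Delta> *\<^sub>R (F p1 - F q)"
    define B where "B = G p1 - G q"
    have Hp: "H' (u, v) = ennreal ((norm (a + B *v v m))\<^sup>2)" for v
      unfolding H'_def H_def h_def a_def B_def p
      by (simp add: p algebra_simps matrix_vector_mult_diff_rdistrib scaleR_diff_right)
    have "Y1 u \<in> space (borel \<Otimes>\<^sub>M borel)" by (simp add: space_pair_measure)
    from measurable_compose[OF measurable_Pair[OF measurable_const[OF this] Y2m] Hm]
    have Hum: "(\<lambda>v. H' (u, v)) \<in> borel_measurable ?T" unfolding H'_def by simp
    have "(\<integral>\<^sup>+v. H' (u, v) \<partial>distr M ?T RV) = (\<integral>\<^sup>+\<omega>. H' (u, RV \<omega>) \<partial>M)"
      by (rule nn_integral_distr[OF rvV]) (simp add: Hum)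
    also have "\<dots> = (\<integral>\<^sup>+\<omega>. ennreal ((norm (a + B *v D m \<omega>))\<^sup>2) \<partial>M)"
      unfolding Hp RVm ..
    also have "\<dots> = ennreal ((norm a)\<^sup>2 + \<Delta> * (norm B)\<^sup>2)"
      by (rule gauss_sq[OF distD \<Delta> indD])
    also have "\<dots> \<le> ennreal (exp (- \<beta> * \<Delta> / 2) * (norm (fst (Y1 u) - snd (Y1 u)))\<^sup>2)"
      unfolding p a_def B_def
      by (rule ennreal_leI, simp only: p fst_conv snd_conv, rule pointwise[OF Fl F2 \<Delta> small L])
    finally show "(\<integral>\<^sup>+v. H' (u, v) \<partial>distr M ?T RV) \<le> ennreal (exp (- \<beta> * \<Delta> / 2) * (norm (fst (Y1 u) - snd (Y1 u)))\<^sup>2)" .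
  qed
  also have "\<dots> = (\<integral>\<^sup>+\<omega>. ennreal (exp (- \<beta> * \<Delta> / 2) * (norm (fst (Y1 (RU \<omega>)) - snd (Y1 (RU \<omega>))))\<^sup>2) \<partial>M)"
    by (rule nn_integral_distr[OF rvU]) (use Y1m in measurable)
  also have "\<dots> = (\<integral>\<^sup>+\<omega>. ennreal (exp (- \<beta> * \<Delta> / 2) * (norm (fst (P \<omega>) - snd (P \<omega>)))\<^sup>2) \<partial>M)"
    by (simp add: Y1RU)
  also have "\<dots> = (\<integral>\<^sup>+\<omega>. ennreal (exp (- \<beta> * \<Delta> / 2)) * ?E m \<omega> \<partial>M)"
    by (simp add: P_def D_def ennreal_mult)
  also have "\<dots> = ennreal (exp (- \<beta> * \<Delta> / 2)) * (\<integral>\<^sup>+\<omega>. ?E m \<omega> \<partial>M)"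
  proof (rule nn_integral_cmult)
    have rvP: "P \<in> measurable M (borel \<Otimes>\<^sub>M borel)"
      using measurable_compose[OF rvU Y1m] by (simp add: Y1RU comp_def cong: measurable_cong)
    have cc: "(\<lambda>p::(real^'n) \<times> (real^'n). (norm (fst p - snd p))\<^sup>2) \<in> borel_measurable (borel \<Otimes>\<^sub>M borel)"
      unfolding borel_prod by (intro borel_measurable_continuous_onI continuous_intros)
    have "(\<lambda>\<omega>. (norm (fst (P \<omega>) - snd (P \<omega>)))\<^sup>2) \<in> borel_measurable M"
      using measurable_compose[OF rvP cc] by simp
    then show "(\<lambda>\<omega>. ?E m \<omega>) \<in> borel_measurable M"
      by (simp add: P_def D_def)
  qed
  finally show ?thesis .
qed

theorem lemma4p2:
  fixes f :: "real ^ 'n1 \<Rightarrow> real ^ 'n2 \<Rightarrow> real ^ 'n2"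
    and g :: "real ^ 'n1 \<Rightarrow> real ^ 'n2 \<Rightarrow> real ^ 'd2 ^ 'n2"
    and L \<beta> :: real
  assumes "continuous_on UNIV (\<lambda>(x, y). f x y)" and "continuous_on UNIV (\<lambda>(x, y). g x y)"
    and L_pos: "L > 0"
    and F1: "\<And>x1 y1 x2 y2. max (norm (f x1 y1 - f x2 y2)) (norm (g x1 y1 - g x2 y2))
               \<le> L * (norm (x1 - x2) + norm (y1 - y2))"
    and beta_pos: "\<beta> > 0"
    and F2: "\<And>x y1 y2. 2 * ((y1 - y2) \<bullet> (f x y1 - f x y2)) + (norm (g x y1 - g x y2))\<^sup>2
               \<le> - \<beta> * (norm (y1 - y2))\<^sup>2"
  shows "\<exists>\<Delta>bar. 0 < \<Delta>bar \<and> \<Delta>bar \<le> 1 \<and>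
    (\<forall>(M :: 'w measure) (W :: nat \<Rightarrow> real \<Rightarrow> 'w \<Rightarrow> real ^ 'd2).
       prob_space M \<and> (\<forall>n. brownian_motion M (W n)) \<and>
       prob_space.indep_vars M (\<lambda>_. Pi\<^sub>M UNIV (\<lambda>_::real. (borel :: (real ^ 'd2) measure)))
         (\<lambda>n \<omega>. \<lambda>t. W n t \<omega>) UNIV \<longrightarrow>
       (\<forall>\<Delta>2 x y z n m. 0 < \<Delta>2 \<and> \<Delta>2 < \<Delta>bar \<longrightarrow>
          (\<integral>\<^sup>+ \<omega>. ennreal ((norm (em_chain f g \<Delta>2 (W n) x y m \<omega> - em_chain f g \<Delta>2 (W n) x z m \<omega>))\<^sup>2) \<partial>M)
          \<le> ennreal ((norm (y - z))\<^sup>2 * exp (- \<beta> * real m * \<Delta>2 / 2))))"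
proof (intro exI conjI allI impI)
  define Db where "Db = min 1 (\<beta> / (2 * L^2))"
  show "0 < Db" using L_pos beta_pos by (simp add: Db_def)
  show "Db \<le> 1" by (simp add: Db_def)
  fix M :: "'w measure" and W :: "nat \<Rightarrow> real \<Rightarrow> 'w \<Rightarrow> real ^ 'd2" and \<Delta>2 x y z n m
  assume H: "prob_space M \<and> (\<forall>n. brownian_motion M (W n)) \<and>
       prob_space.indep_vars M (\<lambda>_. Pi\<^sub>M UNIV (\<lambda>_::real. (borel :: (real ^ 'd2) measure)))
         (\<lambda>n \<omega>. \<lambda>t. W n t \<omega>) UNIV"
  assume D: "0 < \<Delta>2 \<and> \<Delta>2 < Db"
  interpret prob_space M using H by simp
  have bm: "brownian_motion M (W n)" using H by simp
  have \<Delta>: "0 < \<Delta>2" using D by simp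
  have small: "L^2 * \<Delta>2 \<le> \<beta> / 2"
  proof -
    have "\<Delta>2 < \<beta> / (2 * L^2)" using D by (simp add: Db_def)
    then have "\<Delta>2 * (2 * L^2) < \<beta>" using L_pos by (simp add: pos_less_divide_eq)
    then show ?thesis by (simp add: algebra_simps)
  qed
  have cF: "continuous_on UNIV (f x)"
  proof -
    have "continuous_on UNIV (\<lambda>y. (\<lambda>(x, y). f x y) (x, y))"
      by (rule continuous_on_compose2[OF assms(1)]) (auto intro: continuous_intros)
    then show ?thesis by simp
  qed
  have cG: "continuous_on UNIV (g x)"
  proof -
    have "continuous_on UNIV (\<lambda>y. (\<lambda>(x, y). g x y) (x, y))"
      by (rule continuous_on_compose2[OF assms(2)]) (auto intro: continuous_intros)
    then show ?thesis by simp
  qed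
  have Fl: "norm (f x y1 - f x y2) \<le> L * norm (y1 - y2)" for y1 y2
    using F1[of x y1 x y2] by simp
  let ?E = "\<lambda>k. (\<integral>\<^sup>+\<omega>. ennreal ((norm (chainD (f x) (g x) \<Delta>2 y (\<lambda>j. W n (real (Suc j) * \<Delta>2) \<omega> - W n (real j * \<Delta>2) \<omega>) k
            - chainD (f x) (g x) \<Delta>2 z (\<lambda>j. W n (real (Suc j) * \<Delta>2) \<omega> - W n (real j * \<Delta>2) \<omega>) k))\<^sup>2) \<partial>M)"
  have "?E m \<le> ennreal ((norm (y - z))\<^sup>2 * exp (- \<beta> * real m * \<Delta>2 / 2))"
  proof (induction m)
    case 0
    then show ?case by (simp add: emeasure_space_1)
  next
    case (Suc m)
    have "?E (Suc m) \<le> ennreal (exp (- \<beta> * \<Delta>2 / 2)) * ?E m"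
      by (rule step_lemma[OF bm cF cG \<Delta> small L_pos Fl F2])
    also have "\<dots> \<le> ennreal (exp (- \<beta> * \<Delta>2 / 2)) * ennreal ((norm (y - z))\<^sup>2 * exp (- \<beta> * real m * \<Delta>2 / 2))"
      by (rule mult_left_mono[OF Suc]) simp
    also have "\<dots> = ennreal (exp (- \<beta> * \<Delta>2 / 2) * ((norm (y - z))\<^sup>2 * exp (- \<beta> * real m * \<Delta>2 / 2)))"
      by (simp add: ennreal_mult)
    also have "exp (- \<beta> * \<Delta>2 / 2) * ((norm (y - z))\<^sup>2 * exp (- \<beta> * real m * \<Delta>2 / 2))
        = (norm (y - z))\<^sup>2 * exp (- \<beta> * real (Suc m) * \<Delta>2 / 2)"
    proof -
      have "exp (- \<beta> * \<Delta>2 / 2) * exp (- \<beta> * real m * \<Delta>2 / 2) = exp (- \<beta> * real (Suc m) * \<Delta>2 / 2)"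
      proof -
        have e: "- \<beta> * \<Delta>2 / 2 + - \<beta> * real m * \<Delta>2 / 2 = - \<beta> * real (Suc m) * \<Delta>2 / 2"
          by (simp add: algebra_simps add_divide_distrib)
        show ?thesis by (simp only: mult_exp_exp e)
      qed
      then show ?thesis by (simp add: algebra_simps)
    qed
    finally show ?case .
  qed
  then show "(\<integral>\<^sup>+ \<omega>. ennreal ((norm (em_chain f g \<Delta>2 (W n) x y m \<omega> - em_chain f g \<Delta>2 (W n) x z m \<omega>))\<^sup>2) \<partial>M)
          \<le> ennreal ((norm (y - z))\<^sup>2 * exp (- \<beta> * real m * \<Delta>2 / 2))"
    by (simp add: em_chain_eq)
qed

end
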